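(* Let $p$ be a prime, $R=\mathbb{F}_p[x,x^{-1}]$, $n\ge1$, let $U$ be an additive subgroup of $R^n$, and let $(f_m)_{m\ge1}$ be an enumeration of the irreducible elements of $\mathbb{F}_p[x]$. Then $U_m=f_mU\to\{0\}$.
   Context: Convergence of subsets $U_m\to\{0\}$ of $R^n$ means that for every $v\in R^n$, the truth value of $v\in U_m$ is eventually equal to that of $v\in\{0\}$ (the topology induced from $\{0,1\}^{R^n}$). *)

theory Defs
  imports "HOL-Analysis.Analysis" "HOL-Computational_Algebra.Polynomial_FPS"
    "HOL-Computational_Algebra.Formal_Laurent_Series"
begin

text \<open>Laurent polynomials k[x,x^-1], realised inside the formal Laurent series as
  those with finitely many nonzero coefficients (the support is already bounded below).\<close>
definition laurent_polys :: "'k::zero fls set" where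
  "laurent_polys = {f. \<exists>N::int. \<forall>m\<ge>N. fls_nth f m = 0}"

definition laurent_vecs :: "('k::zero fls ^ 'n) set" where
  "laurent_vecs = {v. \<forall>i. v $ i \<in> laurent_polys}"

definition poly_to_laurent :: "'k::comm_ring_1 poly \<Rightarrow> 'k fls" where
  "poly_to_laurent q = fps_to_fls (fps_of_poly q)"

definition additive_subgroup :: "'a::ab_group_add set \<Rightarrow> bool" where
  "additive_subgroup U \<longleftrightarrow> 0 \<in> U \<and> (\<forall>a\<in>U. \<forall>b\<in>U. a + b \<in> U) \<and> (\<forall>a\<in>U. - a \<in> U)"

definition scale_set :: "'k::comm_ring_1 fls \<Rightarrow> ('k fls ^ 'n) set \<Rightarrow> ('k fls ^ 'n) set" where
  "scale_set c U = (\<lambda>u. \<chi> i. c * u $ i) ` U"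

end

theory Submission
  imports Defs "HOL-Library.FuncSet"
begin

lemma finite_deg_le: "finite {q :: 'k::{field,finite} poly. degree q \<le> d}"
proof -
  let ?A = "{q :: 'k poly. degree q \<le> d}"
  let ?g = "\<lambda>q::'k poly. restrict (coeff q) {..d}"
  have "?g ` ?A \<subseteq> PiE {..d} (\<lambda>_. UNIV)" by (intro image_subsetI restrict_PiE) auto
  hence "finite (?g ` ?A)" by (rule finite_subset) (intro finite_PiE; simp)
  moreover have "inj_on ?g ?A"
  proof (rule inj_onI)
    fix p q assume p: "p \<in> ?A" and q: "q \<in> ?A" and e: "?g p = ?g q"
    show "p = q"
    proof (rule poly_eqI)
      fix n show "coeff p n = coeff q n"
      proof (cases "n \<le> d")
        case True then show ?thesis using fun_cong[OF e, of n] by simp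
      next
        case False then show ?thesis using p q by (simp add: coeff_eq_0)
      qed
    qed
  qed
  ultimately show ?thesis by (rule finite_imageD)
qed

lemma base_poly:
  fixes w :: "'k::field fls"
  assumes "w \<in> laurent_polys"
  shows "\<exists>p. fls_base_factor_to_fps w = fps_of_poly p"
proof -
  from assms obtain M where M: "\<forall>m\<ge>M. fls_nth w m = 0" unfolding laurent_polys_def by auto
  define N where "N = nat (M - fls_subdegree w)"
  define p where "p = Abs_poly (\<lambda>i. if i \<le> N then fls_base_factor_to_fps w $ i else 0)"
  have "fls_base_factor_to_fps w = fps_of_poly p"
  proof (rule fps_ext)
    fix n
    show "fls_base_factor_to_fps w $ n = fps_of_poly p $ n"
    proof (cases "n \<le> N")
      case True then show ?thesis by (simp add: p_def coeff_Abs_poly_If_le)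
    next
      case False
      hence "fls_subdegree w + int n \<ge> M" unfolding N_def by linarith
      hence "fls_nth w (fls_subdegree w + int n) = 0" using M by blast
      then show ?thesis using False by (simp add: p_def coeff_Abs_poly_If_le fls_base_factor_to_fps_nth add.commute)
    qed
  qed
  thus ?thesis by blast
qed

lemma base_of_poly:
  fixes q :: "'k::field poly"
  assumes "coeff q 0 \<noteq> 0"
  shows "fls_base_factor_to_fps (poly_to_laurent q) = fps_of_poly q"
proof -
  have "subdegree (fps_of_poly q) = 0" using assms by (simp add: subdegree_eq_0_iff)
  thus ?thesis unfolding poly_to_laurent_def
    by (simp add: fls_base_factor_to_fps_to_fls fps_unit_factor_def fls_subdegree_fls_to_fps)
qed

lemma deg_bound:
  fixes q :: "'k::field poly" and w u :: "'k fls"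
  assumes "irreducible q" "w \<noteq> 0" "w \<in> laurent_polys" "u \<in> laurent_polys"
    "w = poly_to_laurent q * u"
    "fls_base_factor_to_fps w = fps_of_poly pw"
  shows "degree q \<le> max (degree pw) 1"
proof (cases "coeff q 0 = 0")
  case True
  hence "[:0,1:] dvd q" by (simp add: dvd_iff_poly_eq_0 poly_0_coeff_0)
  then obtain r where r: "q = [:0,1:] * r" by (elim dvdE)
  have "\<not> is_unit ([:0,1:] :: 'k poly)" by (simp add: is_unit_iff_degree)
  hence "is_unit r" using irreducibleD[OF assms(1) r] by blast
  moreover have "r \<noteq> 0" using \<open>is_unit r\<close> by auto
  ultimately have "degree r = 0" by (simp add: is_unit_iff_degree)
  moreover note \<open>r \<noteq> 0\<close>
  ultimately have "degree q = 1" using r by (simp add: degree_mult_eq)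
  thus ?thesis by simp
next
  case False
  obtain pu where pu: "fls_base_factor_to_fps u = fps_of_poly pu" using base_poly[OF assms(4)] by blast
  have "fls_base_factor_to_fps w = fls_base_factor_to_fps (poly_to_laurent q) * fls_base_factor_to_fps u"
    unfolding assms(5) by (rule fls_base_factor_to_fps_mult)
  hence "fps_of_poly pw = fps_of_poly (q * pu)"
    unfolding assms(6) pu base_of_poly[OF False] fps_of_poly_mult .
  hence e: "pw = q * pu" by (simp add: fps_of_poly_eq_iff)
  have "pw \<noteq> 0" using assms(2,6) fls_base_factor_to_fps_nonzero[of w] by auto
  hence "pu \<noteq> 0" "q \<noteq> 0" using e by auto
  hence "degree pw = degree q + degree pu" using e by (simp add: degree_mult_eq)
  thus ?thesis by simp
qed

theorem lemma6p16:
  fixes U :: "('k::{field,finite} fls ^ 'n) set"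
    and f :: "nat \<Rightarrow> 'k poly"
  assumes "prime CARD('k)"
    and "U \<subseteq> laurent_vecs"
    and "additive_subgroup U"
    and "bij_betw f {1..} {q. irreducible q}"
  shows "\<forall>v\<in>laurent_vecs.
           \<forall>\<^sub>F m in sequentially. (v \<in> scale_set (poly_to_laurent (f m)) U \<longleftrightarrow> v = 0)"
proof
  fix v :: "'k fls ^ 'n" assume v: "v \<in> laurent_vecs"
  have zero: "(0 :: 'k fls ^ 'n) \<in> scale_set c U" for c
  proof -
    have "0 \<in> U" using assms(3) unfolding additive_subgroup_def by auto
    moreover have "(0 :: 'k fls ^ 'n) = (\<chi> i. c * (0::'k fls ^ 'n) $ i)" by (simp add: vec_eq_iff)
    ultimately show ?thesis unfolding scale_set_def by blast
  qed
  show "\<forall>\<^sub>F m in sequentially. (v \<in> scale_set (poly_to_laurent (f m)) U \<longleftrightarrow> v = 0)"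
  proof (cases "v = 0")
    case True then show ?thesis using zero by simp
  next
    case False
    then obtain i where i: "v $ i \<noteq> 0" by (auto simp: vec_eq_iff)
    have vi: "v $ i \<in> laurent_polys" using v unfolding laurent_vecs_def by auto
    obtain pw where pw: "fls_base_factor_to_fps (v $ i) = fps_of_poly pw" using base_poly[OF vi] by blast
    define d where "d = max (degree pw) 1"
    define M where "M = {m \<in> {1..}. degree (f m) \<le> d}"
    have inj: "inj_on f {1..}" using assms(4) by (simp add: bij_betw_def)
    have "finite M"
    proof (rule finite_imageD)
      show "finite (f ` M)" by (rule finite_subset[OF _ finite_deg_le[of d]]) (auto simp: M_def)
      show "inj_on f M" using inj by (rule inj_on_subset) (auto simp: M_def)
    qed
    then obtain N where N: "\<forall>m\<in>M. m < N" using finite_nat_set_iff_bounded by blast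
    show ?thesis
      unfolding eventually_sequentially
    proof (intro exI[of _ "max N 1"] allI impI)
      fix m assume m: "max N 1 \<le> m"
      hence "m \<notin> M" using N by fastforce
      have irr: "irreducible (f m)" using assms(4) m by (auto simp: bij_betw_def)
      have "v \<notin> scale_set (poly_to_laurent (f m)) U"
      proof
        assume "v \<in> scale_set (poly_to_laurent (f m)) U"
        then obtain u where u: "u \<in> U" "v = (\<chi> j. poly_to_laurent (f m) * u $ j)"
          unfolding scale_set_def by blast
        have ui: "u $ i \<in> laurent_polys" using u(1) assms(2) unfolding laurent_vecs_def by auto
        have "v $ i = poly_to_laurent (f m) * u $ i" using u(2) by simp
        hence "degree (f m) \<le> d" unfolding d_def
          using deg_bound[OF irr i vi ui _ pw] by blast
        thus False using \<open>m \<notin> M\<close> m unfolding M_def by auto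
      qed
      thus "v \<in> scale_set (poly_to_laurent (f m)) U \<longleftrightarrow> v = 0" using False by simp
    qed
  qed
qed

end
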